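(* Let $\rho$ be a polymatroid on a finite set $E$ and let $M_1,M_2,\ldots,M_k$ be matroids on $E$ with $\rho=r_{M_1}+r_{M_2}+\cdots+r_{M_k}$. (1) Let $X$ be any incidence set of $\rho$. Then there is exactly one index $i\in[k]$ for which all elements of $X$ are parallel in $M_i$ (i.e., $X$ is contained in a single parallel class of $M_i$), and for every $j\in[k]$ with $j\neq i$, no two elements of $X$ are parallel in $M_j$. If, moreover, the equation $\rho(Y)=1+\sum_{e\in Y}(\rho(e)-1)$ also holds for $Y=X$, then for every $j\neq i$, the only subsets of $X$ that are circuits of $M_j$ are singletons. (2) Let $X$ and $Y$ be incidence sets of $\rho$ and suppose there are elements $a\in X$ and $b\in Y$ with $\rho(\{a,b\})=\rho(a)+\rho(b)$. If $X\cap Y\neq\emptyset$, then $|X\cap Y|=1$, and the unique index $i$ for which the elements of $X$ are parallel in $M_i$ differs from the unique index $j$ for which the elements of $Y$ are parallel in $M_j$.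
   Context: A polymatroid on a finite set $E$ is a function $\rho:2^E\to\mathbb{Z}$ with $\rho(\emptyset)=0$, $\rho(A)\le\rho(B)$ whenever $A\subseteq B\subseteq E$, and $\rho(A\cup B)+\rho(A\cap B)\le\rho(A)+\rho(B)$ for all $A,B\subseteq E$. For matroids $M_1,\dots,M_k$ on $E$, $r_{M_1}+\cdots+r_{M_k}$ denotes the pointwise sum of their rank functions. An incidence set of $\rho$ is a subset $X\subseteq E$ with $|X|\ge 2$ such that for every $Y\subseteq X$ with $|Y|\in\{1,2,3\}$, $\rho(Y)=1+\sum_{e\in Y}(\rho(e)-1)$. Here $[k]=\{1,\dots,k\}$ and $\rho(e)$ means $\rho(\{e\})$. *)

theory Defs
  imports Main
begin

definition polymatroid :: "'a set \<Rightarrow> ('a set \<Rightarrow> int) \<Rightarrow> bool" where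
  "polymatroid E \<rho> \<longleftrightarrow> finite E \<and> \<rho> {} = 0
     \<and> (\<forall>A B. A \<subseteq> B \<and> B \<subseteq> E \<longrightarrow> \<rho> A \<le> \<rho> B)
     \<and> (\<forall>A B. A \<subseteq> E \<and> B \<subseteq> E \<longrightarrow> \<rho> (A \<union> B) + \<rho> (A \<inter> B) \<le> \<rho> A + \<rho> B)"

definition matroid_rank :: "'a set \<Rightarrow> ('a set \<Rightarrow> int) \<Rightarrow> bool" where
  "matroid_rank E r \<longleftrightarrow> finite E
     \<and> (\<forall>A. A \<subseteq> E \<longrightarrow> 0 \<le> r A \<and> r A \<le> int (card A))
     \<and> (\<forall>A B. A \<subseteq> B \<and> B \<subseteq> E \<longrightarrow> r A \<le> r B)
     \<and> (\<forall>A B. A \<subseteq> E \<and> B \<subseteq> E \<longrightarrow> r (A \<union> B) + r (A \<inter> B) \<le> r A + r B)"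

definition incidence_set :: "'a set \<Rightarrow> ('a set \<Rightarrow> int) \<Rightarrow> 'a set \<Rightarrow> bool" where
  "incidence_set E \<rho> X \<longleftrightarrow> X \<subseteq> E \<and> card X \<ge> 2
     \<and> (\<forall>Y. Y \<subseteq> X \<and> card Y \<in> {1,2,3} \<longrightarrow> \<rho> Y = 1 + (\<Sum>e\<in>Y. \<rho> {e} - 1))"

text \<open>e and f are parallel in the matroid with rank r: both non-loops and r{e,f} = 1
  (an element is parallel to itself iff it is a non-loop; parallel classes are the
  classes of this equivalence relation on non-loops).\<close>
definition parallel :: "('a set \<Rightarrow> int) \<Rightarrow> 'a \<Rightarrow> 'a \<Rightarrow> bool" where
  "parallel r e f \<longleftrightarrow> r {e} = 1 \<and> r {f} = 1 \<and> r {e, f} = 1"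

definition all_parallel :: "('a set \<Rightarrow> int) \<Rightarrow> 'a set \<Rightarrow> bool" where
  "all_parallel r X \<longleftrightarrow> (\<forall>e\<in>X. \<forall>f\<in>X. parallel r e f)"

definition no_two_parallel :: "('a set \<Rightarrow> int) \<Rightarrow> 'a set \<Rightarrow> bool" where
  "no_two_parallel r X \<longleftrightarrow> (\<forall>e\<in>X. \<forall>f\<in>X. e \<noteq> f \<longrightarrow> \<not> parallel r e f)"

definition circuit :: "'a set \<Rightarrow> ('a set \<Rightarrow> int) \<Rightarrow> 'a set \<Rightarrow> bool" where
  "circuit E r C \<longleftrightarrow> C \<subseteq> E \<and> r C < int (card C) \<and> (\<forall>D. D \<subset> C \<longrightarrow> r D = int (card D))"

end

theory Submission
  imports Defs
begin

context fixes E :: "'a set" and r :: "'a set \<Rightarrow> int"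
  assumes M: "matroid_rank E r"
begin

lemma mr_fin: "finite E" using M unfolding matroid_rank_def by blast
lemma mr_mono: "A \<subseteq> B \<Longrightarrow> B \<subseteq> E \<Longrightarrow> r A \<le> r B" using M unfolding matroid_rank_def by blast
lemma mr_sub: "A \<subseteq> E \<Longrightarrow> B \<subseteq> E \<Longrightarrow> r (A \<union> B) + r (A \<inter> B) \<le> r A + r B"
  using M unfolding matroid_rank_def by blast
lemma mr_nn: "A \<subseteq> E \<Longrightarrow> 0 \<le> r A" using M unfolding matroid_rank_def by blast
lemma mr_card: "A \<subseteq> E \<Longrightarrow> r A \<le> int (card A)" using M unfolding matroid_rank_def by blast
lemma mr_empty: "r {} = 0" using mr_nn[of "{}"] mr_card[of "{}"] by simp
lemma mr_single: "e \<in> E \<Longrightarrow> r {e} \<le> 1" using mr_card[of "{e}"] by simp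

lemma mr_subadd: "S \<subseteq> E \<Longrightarrow> r S \<le> (\<Sum>e\<in>S. r {e})"
proof -
  assume "S \<subseteq> E"
  then have "finite S" using mr_fin finite_subset by blast
  then show ?thesis using \<open>S \<subseteq> E\<close>
  proof (induction S rule: finite_induct)
    case empty then show ?case by (simp add: mr_empty)
  next
    case (insert x F)
    have "r ({x} \<union> F) + r ({x} \<inter> F) \<le> r {x} + r F" using insert by (intro mr_sub) auto
    moreover have "{x} \<inter> F = {}" using insert by auto
    ultimately show ?case using insert by (simp add: mr_empty)
  qed
qed

lemma mr_pair: "e \<in> E \<Longrightarrow> f \<in> E \<Longrightarrow> e \<noteq> f \<Longrightarrow> r {e, f} \<le> r {e} + r {f}"
  using mr_subadd[of "{e,f}"] by simp

lemma mr_pair2: "e \<in> E \<Longrightarrow> f \<in> E \<Longrightarrow> r {e, f} \<le> r {e} + r {f}"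
  using mr_pair[of e f] mr_nn[of "{e}"] by (cases "e = f") auto

lemma mr_tri: "x \<in> E \<Longrightarrow> y \<in> E \<Longrightarrow> z \<in> E \<Longrightarrow> y \<noteq> z \<Longrightarrow> r {x,y,z} \<le> r {x,y} + r {x,z} - r {x}"
proof -
  assume e: "x \<in> E" "y \<in> E" "z \<in> E" "y \<noteq> z"
  have "r ({x,y} \<union> {x,z}) + r ({x,y} \<inter> {x,z}) \<le> r {x,y} + r {x,z}" using e by (intro mr_sub) auto
  moreover have "{x,y} \<union> {x,z} = {x,y,z}" "{x,y} \<inter> {x,z} = {x}" using e by auto
  ultimately have "r {x,y,z} + r {x} \<le> r {x,y} + r {x,z}" by metis
  then show ?thesis by linarith
qed

lemma mr_split: "C \<subseteq> X \<Longrightarrow> X \<subseteq> E \<Longrightarrow> r X \<le> r C + (\<Sum>e\<in>X-C. r {e})"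
proof -
  assume a: "C \<subseteq> X" "X \<subseteq> E"
  have "r (C \<union> (X-C)) + r (C \<inter> (X - C)) \<le> r C + r (X - C)" using a by (intro mr_sub) auto
  moreover have "C \<union> (X-C) = X" "C \<inter> (X-C) = {}" using a by auto
  moreover have "r (X - C) \<le> (\<Sum>e\<in>X-C. r {e})" using a by (intro mr_subadd) auto
  ultimately show ?thesis by (simp add: mr_empty)
qed

lemma par_trans: "parallel r a c \<Longrightarrow> parallel r c b \<Longrightarrow> a \<in> E \<Longrightarrow> b \<in> E \<Longrightarrow> c \<in> E \<Longrightarrow> parallel r a b"
proof -
  assume p: "parallel r a c" "parallel r c b" and e: "a \<in> E" "b \<in> E" "c \<in> E"
  have "r ({a,c} \<union> {c,b}) + r ({a,c} \<inter> {c,b}) \<le> r {a,c} + r {c,b}" using e by (intro mr_sub) auto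
  moreover have "r {c} \<le> r ({a,c} \<inter> {c,b})" using e by (intro mr_mono) auto
  moreover have "r {a,b} \<le> r ({a,c} \<union> {c,b})" using e by (intro mr_mono) auto
  moreover have "r {a} \<le> r {a,b}" using e by (intro mr_mono) auto
  ultimately show ?thesis using p unfolding parallel_def by auto
qed

lemma allpar_rank: "S \<subseteq> E \<Longrightarrow> S \<noteq> {} \<Longrightarrow> \<forall>e\<in>S. \<forall>f\<in>S. parallel r e f \<Longrightarrow> r S = 1"
proof -
  assume a: "S \<subseteq> E" "S \<noteq> {}" "\<forall>e\<in>S. \<forall>f\<in>S. parallel r e f"
  have "finite S" using a mr_fin finite_subset by blast
  then show ?thesis using a
  proof (induction S rule: finite_induct)
    case empty then show ?case by simp
  next
    case (insert x F)
    show ?case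
    proof (cases "F = {}")
      case True then show ?thesis using insert unfolding parallel_def by auto
    next
      case False
      then obtain s where s: "s \<in> F" by auto
      have IH: "r F = 1" using insert False by auto
      have "r (F \<union> {s,x}) + r (F \<inter> {s,x}) \<le> r F + r {s,x}" using insert s by (intro mr_sub) auto
      moreover have "r {s} \<le> r (F \<inter> {s,x})" using insert s by (intro mr_mono) auto
      moreover have "F \<union> {s,x} = insert x F" using s by auto
      moreover have "r {x} \<le> r (insert x F)" using insert by (intro mr_mono) auto
      moreover have "parallel r s x" "parallel r x x" using insert s by auto
      ultimately show ?thesis using IH unfolding parallel_def by auto
    qed
  qed
qed

lemma par_iff: "e \<in> E \<Longrightarrow> f \<in> E \<Longrightarrow> parallel r e f \<longleftrightarrow> r {e} + r {f} - r {e,f} \<ge> 1"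
proof -
  assume e: "e \<in> E" "f \<in> E"
  have "r {e} \<le> r {e,f}" "r {f} \<le> r {e,f}" using e by (intro mr_mono; auto)+
  then show ?thesis using mr_single[OF e(1)] mr_single[OF e(2)] unfolding parallel_def by auto
qed

end

lemma sum_one: fixes f :: "nat \<Rightarrow> int"
  assumes "finite I" "\<forall>i\<in>I. 0 \<le> f i" "sum f I \<le> 1"
  shows "\<forall>i\<in>I. \<forall>j\<in>I. f i \<ge> 1 \<and> f j \<ge> 1 \<longrightarrow> i = j"
proof (intro ballI impI, rule ccontr)
  fix i j assume a: "i \<in> I" "j \<in> I" "f i \<ge> 1 \<and> f j \<ge> 1" "i \<noteq> j"
  have "sum f {i,j} \<le> sum f I" using assms a by (intro sum_mono2) auto
  then show False using a assms by simp
qed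

lemma sum_ex: fixes f :: "nat \<Rightarrow> int"
  assumes "finite I" "\<forall>i\<in>I. f i \<le> 0" "sum f I \<ge> 1"
  shows False
proof -
  have "sum f I \<le> 0" using assms by (intro sum_nonpos) auto
  then show False using assms by simp
qed


locale setting =
  fixes E :: "'a set" and \<rho> :: "'a set \<Rightarrow> int" and k :: nat and r :: "nat \<Rightarrow> 'a set \<Rightarrow> int"
  assumes poly: "polymatroid E \<rho>"
    and mr: "\<forall>i\<in>{1..k}. matroid_rank E (r i)"
    and sumr: "\<forall>A. A \<subseteq> E \<longrightarrow> \<rho> A = (\<Sum>i\<in>{1..k}. r i A)"
begin

lemma finE: "finite E" using poly unfolding polymatroid_def by blast

lemma mrl: "l \<in> {1..k} \<Longrightarrow> matroid_rank E (r l)" using mr by blast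

lemma inc_pair: assumes "incidence_set E \<rho> X" "e \<in> X" "f \<in> X" "e \<noteq> f"
  shows "\<rho> {e,f} = \<rho> {e} + \<rho> {f} - 1"
proof -
  have "{e,f} \<subseteq> X" "card {e,f} \<in> {1,2,3}" using assms by auto
  then have "\<rho> {e,f} = 1 + (\<Sum>x\<in>{e,f}. \<rho> {x} - 1)" using assms(1) unfolding incidence_set_def by blast
  then show ?thesis using assms by simp
qed

lemma inc_triple: assumes "incidence_set E \<rho> X" "e \<in> X" "f \<in> X" "g \<in> X" "e \<noteq> f" "e \<noteq> g" "f \<noteq> g"
  shows "\<rho> {e,f,g} = \<rho> {e} + \<rho> {f} + \<rho> {g} - 2"
proof -
  have "{e,f,g} \<subseteq> X" "card {e,f,g} \<in> {1,2,3}" using assms by auto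
  then have "\<rho> {e,f,g} = 1 + (\<Sum>x\<in>{e,f,g}. \<rho> {x} - 1)" using assms(1) unfolding incidence_set_def by blast
  then show ?thesis using assms by simp
qed

lemma inc_sub: "incidence_set E \<rho> X \<Longrightarrow> X \<subseteq> E" unfolding incidence_set_def by blast

definition d :: "nat \<Rightarrow> 'a \<Rightarrow> 'a \<Rightarrow> int" where
  "d l e f = r l {e} + r l {f} - r l {e,f}"

lemma d_nn: "l \<in> {1..k} \<Longrightarrow> e \<in> E \<Longrightarrow> f \<in> E \<Longrightarrow> 0 \<le> d l e f"
  unfolding d_def using mr_pair2[OF mrl] by fastforce

lemma d_par: "l \<in> {1..k} \<Longrightarrow> e \<in> E \<Longrightarrow> f \<in> E \<Longrightarrow> parallel (r l) e f \<longleftrightarrow> 1 \<le> d l e f"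
  unfolding d_def using par_iff[OF mrl] by blast

lemma d_sum: "e \<in> E \<Longrightarrow> f \<in> E \<Longrightarrow> (\<Sum>l\<in>{1..k}. d l e f) = \<rho> {e} + \<rho> {f} - \<rho> {e,f}"
  unfolding d_def using sumr by (simp add: sum_subtractf sum.distrib)

lemma pair_unique:
  assumes "incidence_set E \<rho> X" "e \<in> X" "f \<in> X" "e \<noteq> f"
  shows "(\<exists>l\<in>{1..k}. parallel (r l) e f) \<and>
         (\<forall>l\<in>{1..k}. \<forall>l'\<in>{1..k}. parallel (r l) e f \<and> parallel (r l') e f \<longrightarrow> l = l')"
proof -
  have E: "e \<in> E" "f \<in> E" using assms inc_sub by auto
  have s: "(\<Sum>l\<in>{1..k}. d l e f) = 1" using d_sum[OF E] inc_pair[OF assms] by simp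
  have ex: "\<exists>l\<in>{1..k}. parallel (r l) e f"
  proof (rule ccontr)
    assume nex: "\<not> ?thesis"
    have "\<forall>l\<in>{1..k}. d l e f \<le> 0"
    proof
      fix l assume l: "l \<in> {1..k}"
      have "\<not> parallel (r l) e f" using nex l by blast
      then show "d l e f \<le> 0" using d_par[OF l E] by simp
    qed
    then show False using sum_ex[of "{1..k}" "\<lambda>l. d l e f"] s by simp
  qed
  have nn: "\<forall>i\<in>{1..k}. 0 \<le> d i e f" using d_nn[OF _ E] by blast
  have s1: "sum (\<lambda>l. d l e f) {1..k} \<le> 1" using s by simp
  have U: "\<forall>i\<in>{1..k}. \<forall>j\<in>{1..k}. d i e f \<ge> 1 \<and> d j e f \<ge> 1 \<longrightarrow> i = j"
    by (rule sum_one[OF finite_atLeastAtMost nn s1])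
  have "\<forall>l\<in>{1..k}. \<forall>l'\<in>{1..k}. parallel (r l) e f \<and> parallel (r l') e f \<longrightarrow> l = l'"
  proof (intro ballI impI)
    fix l l' assume l: "l \<in> {1..k}" "l' \<in> {1..k}" "parallel (r l) e f \<and> parallel (r l') e f"
    then have "d l e f \<ge> 1" "d l' e f \<ge> 1" using d_par[OF l(1) E] d_par[OF l(2) E] by auto
    then show "l = l'" using U l(1,2) by blast
  qed
  then show ?thesis using ex by blast
qed

lemma triple:
  assumes X: "incidence_set E \<rho> X" and el: "e \<in> X" "f \<in> X" "g \<in> X" and ne: "e \<noteq> f" "e \<noteq> g" "f \<noteq> g"
    and l: "l \<in> {1..k}" "l' \<in> {1..k}" and p: "parallel (r l) e f" "parallel (r l') e g"
  shows "l = l'"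
proof (rule ccontr)
  assume nl: "l \<noteq> l'"
  have E: "e \<in> E" "f \<in> E" "g \<in> E" using X el inc_sub by auto
  define D where "D m = r m {e} + r m {f} + r m {g} - r m {e,f,g}" for m
  have Dsum: "(\<Sum>m\<in>{1..k}. D m) = 2"
  proof -
    have "(\<Sum>m\<in>{1..k}. D m) = \<rho> {e} + \<rho> {f} + \<rho> {g} - \<rho> {e,f,g}"
      unfolding D_def using sumr E by (simp add: sum_subtractf sum.distrib)
    then show ?thesis using inc_triple[OF X el ne] by simp
  qed
  have De: "D m \<ge> d m e f + d m e g" if "m \<in> {1..k}" for m
    using mr_tri[OF mrl[OF that] E(1) E(2) E(3) ne(3)] unfolding D_def d_def by simp
  have Df: "D m \<ge> d m f e + d m f g" if "m \<in> {1..k}" for m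
    using mr_tri[OF mrl[OF that] E(2) E(1) E(3) ne(2)] unfolding D_def d_def by (simp add: insert_commute)
  have Dg: "D m \<ge> d m g e + d m g f" if "m \<in> {1..k}" for m
    using mr_tri[OF mrl[OF that] E(3) E(1) E(2) ne(1)] unfolding D_def d_def by (simp add: insert_commute)
  have dsym: "d m x y = d m y x" for m x y unfolding d_def by (simp add: insert_commute)
  have Dnn: "\<forall>m\<in>{1..k}. 0 \<le> D m"
  proof
    fix m assume m: "m \<in> {1..k}"
    have "0 \<le> d m e f" "0 \<le> d m e g" using d_nn[OF m] E by auto
    then show "0 \<le> D m" using De[OF m] by linarith
  qed
  obtain h where h: "h \<in> {1..k}" "parallel (r h) f g" using pair_unique[OF X el(2) el(3) ne(3)] by blast
  have d1: "d l e f \<ge> 1" "d l' e g \<ge> 1" "d h f g \<ge> 1" using d_par E l h p by auto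
  have d0: "d m x y \<ge> 0" if "m \<in> {1..k}" "x \<in> {e,f,g}" "y \<in> {e,f,g}" for m x y
    using d_nn[OF that(1)] E that by auto
  have "sum D {l,l',h} \<le> sum D {1..k}" using l h Dnn by (intro sum_mono2) auto
  moreover have "sum D {l,l',h} \<ge> 3"
  proof (cases "h = l \<or> h = l'")
    case True
    then show ?thesis
    proof
      assume "h = l"
      then have "d l f g \<ge> 1" using d1(3) by simp
      then have "D l \<ge> 2" using Df[OF l(1)] d1(1) dsym[of l f e] by linarith
      moreover have "D l' \<ge> 1" using De[OF l(2)] d1 d_nn[OF l(2) E(1) E(2)] by linarith
      moreover have "{l,l',h} = {l,l'}" using \<open>h = l\<close> by auto
      ultimately show ?thesis using nl by simp
    next
      assume "h = l'"
      then have "d l' f g \<ge> 1" using d1(3) by simp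
      then have "D l' \<ge> 2" using Dg[OF l(2)] d1(2) dsym[of l' g e] dsym[of l' g f] by linarith
      moreover have "D l \<ge> 1" using De[OF l(1)] d1 d_nn[OF l(1) E(1) E(3)] by linarith
      moreover have "{l,l',h} = {l,l'}" using \<open>h = l'\<close> by auto
      ultimately show ?thesis using nl by simp
    qed
  next
    case False
    have "D l' \<ge> 1" using De[OF l(2)] d1 d_nn[OF l(2) E(1) E(2)] by linarith
    moreover have "D l \<ge> 1" using De[OF l(1)] d1 d_nn[OF l(1) E(1) E(3)] by linarith
    moreover have "D h \<ge> 1" using Df[OF h(1)] d1 d_nn[OF h(1) E(2) E(1)] by linarith
    ultimately show ?thesis using nl False by simp
  qed
  ultimately show False using Dsum by simp
qed


lemma par_sym: "parallel q e f \<longleftrightarrow> parallel q f e"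
  unfolding parallel_def by (auto simp: insert_commute)

lemma par_refl: "parallel q e f \<Longrightarrow> parallel q e e"
  unfolding parallel_def by auto

lemma two_elems: assumes "incidence_set E \<rho> X" obtains x0 y0 where "x0 \<in> X" "y0 \<in> X" "x0 \<noteq> y0"
proof -
  have fin: "finite X" using assms inc_sub finE finite_subset by blast
  have "card X \<ge> 2" using assms unfolding incidence_set_def by blast
  then have "\<not> (\<forall>a\<in>X. \<forall>b\<in>X. a = b)" using card_le_Suc0_iff_eq[OF fin] by auto
  then show ?thesis using that by blast
qed

lemma part1_ex: assumes X: "incidence_set E \<rho> X" shows "\<exists>i\<in>{1..k}. all_parallel (r i) X"
proof -
  obtain x0 y0 where xy: "x0 \<in> X" "y0 \<in> X" "x0 \<noteq> y0" using two_elems[OF X] by blast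
  obtain i where i: "i \<in> {1..k}" "parallel (r i) x0 y0" using pair_unique[OF X xy] by blast
  have A: "parallel (r i) x0 e" if e: "e \<in> X" "e \<noteq> x0" for e
  proof (cases "e = y0")
    case True then show ?thesis using i by simp
  next
    case False
    obtain j where j: "j \<in> {1..k}" "parallel (r j) x0 e" using pair_unique[OF X xy(1) e(1) e(2)[symmetric]] by blast
    have ne: "x0 \<noteq> e" "y0 \<noteq> e" using e False by auto
    show ?thesis using triple[OF X xy(1) xy(2) e(1) xy(3) ne i(1) j(1) i(2) j(2)] j by simp
  qed
  have B: "parallel (r i) e f" if e: "e \<in> X" "e \<noteq> x0" "f \<in> X" "f \<noteq> x0" "e \<noteq> f" for e f
  proof -
    obtain j where j: "j \<in> {1..k}" "parallel (r j) e f" using pair_unique[OF X e(1) e(3) e(5)] by blast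
    have "parallel (r i) e x0" using par_sym A[OF e(1) e(2)] by metis
    moreover have ne: "x0 \<noteq> f" using e by auto
    ultimately have "i = j" using triple[OF X e(1) xy(1) e(3) e(2) e(5) ne i(1) j(1)] j(2) by blast
    then show ?thesis using j by simp
  qed
  have C: "parallel (r i) e f" if e: "e \<in> X" "f \<in> X" "e \<noteq> f" for e f
  proof (cases "e = x0")
    case True then show ?thesis using A e by simp
  next
    case False
    show ?thesis
    proof (cases "f = x0")
      case True then show ?thesis using par_sym A[OF e(1) False] by metis
    next
      case False2: False
      show ?thesis by (rule B[OF e(1) False e(2) False2 e(3)])
    qed
  qed
  have "all_parallel (r i) X" unfolding all_parallel_def
  proof (intro ballI)
    fix e f assume e: "e \<in> X" "f \<in> X"
    show "parallel (r i) e f"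
    proof (cases "e = f")
      case False show ?thesis by (rule C[OF e False])
    next
      case True
      show ?thesis
      proof (cases "e = x0")
        case True2: True
        then show ?thesis using True par_refl[OF i(2)] by simp
      next
        case False
        have "parallel (r i) e x0" using par_sym A[OF e(1) False] by metis
        then show ?thesis using True par_refl by simp
      qed
    qed
  qed
  then show ?thesis using i by blast
qed

lemma part1_uniq: assumes X: "incidence_set E \<rho> X" and ij: "i \<in> {1..k}" "j \<in> {1..k}"
  and p: "all_parallel (r i) X" "all_parallel (r j) X" shows "i = j"
proof -
  obtain x0 y0 where xy: "x0 \<in> X" "y0 \<in> X" "x0 \<noteq> y0" using two_elems[OF X] by blast
  have "parallel (r i) x0 y0" "parallel (r j) x0 y0" using p xy unfolding all_parallel_def by auto
  then show ?thesis using pair_unique[OF X xy] ij by blast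
qed

lemma part1_ntp: assumes X: "incidence_set E \<rho> X" and ij: "i \<in> {1..k}" "j \<in> {1..k}" "j \<noteq> i"
  and p: "all_parallel (r i) X" shows "no_two_parallel (r j) X"
  unfolding no_two_parallel_def
proof (intro ballI impI notI)
  fix e f assume e: "e \<in> X" "f \<in> X" "e \<noteq> f" "parallel (r j) e f"
  have "parallel (r i) e f" using p e unfolding all_parallel_def by auto
  then show False using pair_unique[OF X e(1) e(2) e(3)] e(4) ij by blast
qed


lemma part1_circ: assumes X: "incidence_set E \<rho> X" and i: "i \<in> {1..k}" "all_parallel (r i) X"
  and eq: "\<rho> X = 1 + (\<Sum>e\<in>X. \<rho> {e} - 1)" and j: "j \<in> {1..k}" "j \<noteq> i"
  and C: "C \<subseteq> X" "circuit E (r j) C"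
  shows "card C = 1"
proof -
  have XE: "X \<subseteq> E" using X inc_sub by blast
  have finX: "finite X" using XE finE finite_subset by blast
  have Xne: "X \<noteq> {}" using two_elems[OF X] by blast
  define DX where "DX m = (\<Sum>e\<in>X. r m {e}) - r m X" for m
  have DXnn: "\<forall>m\<in>{1..k}. 0 \<le> DX m"
  proof
    fix m assume m: "m \<in> {1..k}"
    show "0 \<le> DX m" using mr_subadd[OF mrl[OF m] XE] unfolding DX_def by linarith
  qed
  have "(\<Sum>m\<in>{1..k}. DX m) = (\<Sum>m\<in>{1..k}. \<Sum>e\<in>X. r m {e}) - \<rho> X"
    unfolding DX_def using sumr XE by (simp add: sum_subtractf)
  also have "(\<Sum>m\<in>{1..k}. \<Sum>e\<in>X. r m {e}) = (\<Sum>e\<in>X. \<Sum>m\<in>{1..k}. r m {e})"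
    by (rule sum.swap)
  also have "\<dots> = (\<Sum>e\<in>X. \<rho> {e})"
  proof (rule sum.cong[OF refl])
    fix e assume "e \<in> X"
    then have "{e} \<subseteq> E" using XE by blast
    then show "(\<Sum>m\<in>{1..k}. r m {e}) = \<rho> {e}" using sumr by metis
  qed
  also have "\<rho> X = 1 + (\<Sum>e\<in>X. \<rho> {e}) - int (card X)" using eq by (simp add: sum_subtractf)
  finally have sumDX: "(\<Sum>m\<in>{1..k}. DX m) = int (card X) - 1" by simp
  have r1: "r i {e} = 1" if "e \<in> X" for e using i(2) that unfolding all_parallel_def parallel_def by blast
  have "r i X = 1" using allpar_rank[OF mrl[OF i(1)] XE Xne] i(2) unfolding all_parallel_def by blast
  then have DXi: "DX i = int (card X) - 1" unfolding DX_def using r1 by simp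
  have "sum DX {i,j} \<le> sum DX {1..k}" using i j DXnn by (intro sum_mono2) auto
  then have "DX j \<le> 0" using sumDX DXi j by simp
  then have rjX: "(\<Sum>e\<in>X. r j {e}) \<le> r j X" unfolding DX_def by simp
  have finC: "finite C" using C(1) finX finite_subset by blast
  show ?thesis
  proof (rule ccontr)
    assume nc: "card C \<noteq> 1"
    show False
    proof (cases "C = {}")
      case True
      then show False using C(2) mr_empty[OF mrl[OF j(1)]] unfolding circuit_def by simp
    next
      case False
      then have "card C > 0" using finC by (simp add: card_gt_0_iff)
      have rj1: "r j {e} = 1" if "e \<in> C" for e
      proof -
        have "C \<noteq> {e}"
        proof
          assume "C = {e}" then show False using nc by simp
        qed
        then have "{e} \<subset> C" using that by blast
        moreover have "\<forall>D. D \<subset> C \<longrightarrow> r j D = int (card D)" using C(2) unfolding circuit_def by blast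
        ultimately have "r j {e} = int (card {e})" by blast
        then show ?thesis by simp
      qed
      have sC: "(\<Sum>e\<in>C. r j {e}) = int (card C)" using rj1 by simp
      have "r j X \<le> r j C + (\<Sum>e\<in>X-C. r j {e})" using mr_split[OF mrl[OF j(1)] C(1) XE] .
      moreover have "(\<Sum>e\<in>X. r j {e}) = (\<Sum>e\<in>X-C. r j {e}) + (\<Sum>e\<in>C. r j {e})"
        using sum.subset_diff[OF C(1) finX] .
      ultimately have "int (card C) \<le> r j C" using rjX sC by linarith
      then show False using C(2) unfolding circuit_def by simp
    qed
  qed
qed

lemma part2_neq: assumes X: "incidence_set E \<rho> X" and Y: "incidence_set E \<rho> Y"
  and ab: "a \<in> X" "b \<in> Y" "\<rho> {a, b} = \<rho> {a} + \<rho> {b}" and c: "c \<in> X" "c \<in> Y"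
  and i: "i \<in> {1..k}" "all_parallel (r i) X" "all_parallel (r i) Y"
  shows False
proof -
  have E: "a \<in> E" "b \<in> E" "c \<in> E" using X Y ab c inc_sub by auto
  have "parallel (r i) a c" "parallel (r i) c b" using i ab c unfolding all_parallel_def by auto
  then have "parallel (r i) a b" using par_trans[OF mrl[OF i(1)]] E by blast
  then have "1 \<le> d i a b" using d_par[OF i(1) E(1) E(2)] by blast
  moreover have "d i a b \<le> (\<Sum>l\<in>{1..k}. d l a b)" using i(1) d_nn E by (intro member_le_sum) auto
  moreover have "(\<Sum>l\<in>{1..k}. d l a b) = 0" using d_sum[OF E(1) E(2)] ab(3) by simp
  ultimately show False by simp
qed

lemma part2_card: assumes X: "incidence_set E \<rho> X" and Y: "incidence_set E \<rho> Y"
  and ab: "a \<in> X" "b \<in> Y" "\<rho> {a, b} = \<rho> {a} + \<rho> {b}" and ne: "X \<inter> Y \<noteq> {}"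
  shows "card (X \<inter> Y) = 1"
proof (rule ccontr)
  assume nc: "card (X \<inter> Y) \<noteq> 1"
  have fin: "finite (X \<inter> Y)" using X inc_sub finE finite_subset by blast
  then have "\<not> card (X \<inter> Y) \<le> Suc 0" using nc ne by (metis One_nat_def card_0_eq le_SucE le_zero_eq)
  then obtain c c' where cc: "c \<in> X \<inter> Y" "c' \<in> X \<inter> Y" "c \<noteq> c'" using card_le_Suc0_iff_eq[OF fin] by blast
  obtain i where i: "i \<in> {1..k}" "all_parallel (r i) X" using part1_ex[OF X] by blast
  obtain j where j: "j \<in> {1..k}" "all_parallel (r j) Y" using part1_ex[OF Y] by blast
  have "parallel (r i) c c'" "parallel (r j) c c'" using i j cc unfolding all_parallel_def by auto
  then have "i = j" using pair_unique[OF X _ _ cc(3)] cc i j by blast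
  then show False using part2_neq[OF X Y ab, of "c"] cc i j by blast
qed

end

theorem lemma2p5:
  fixes E :: "'a set" and \<rho> :: "'a set \<Rightarrow> int" and k :: nat
    and r :: "nat \<Rightarrow> 'a set \<Rightarrow> int"
  assumes "polymatroid E \<rho>"
    and "\<forall>i\<in>{1..k}. matroid_rank E (r i)"
    and "\<forall>A. A \<subseteq> E \<longrightarrow> \<rho> A = (\<Sum>i\<in>{1..k}. r i A)"
  shows "(\<forall>X. incidence_set E \<rho> X \<longrightarrow>
            (\<exists>!i. i \<in> {1..k} \<and> all_parallel (r i) X)
          \<and> (\<forall>i\<in>{1..k}. all_parallel (r i) X \<longrightarrow>
               (\<forall>j\<in>{1..k}. j \<noteq> i \<longrightarrow> no_two_parallel (r j) X)
             \<and> (\<rho> X = 1 + (\<Sum>e\<in>X. \<rho> {e} - 1) \<longrightarrow>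
                  (\<forall>j\<in>{1..k}. j \<noteq> i \<longrightarrow>
                     (\<forall>C. C \<subseteq> X \<and> circuit E (r j) C \<longrightarrow> card C = 1)))))
       \<and> (\<forall>X Y a b. incidence_set E \<rho> X \<and> incidence_set E \<rho> Y \<and> a \<in> X \<and> b \<in> Y
            \<and> \<rho> {a, b} = \<rho> {a} + \<rho> {b} \<and> X \<inter> Y \<noteq> {} \<longrightarrow>
            card (X \<inter> Y) = 1
          \<and> (\<forall>i\<in>{1..k}. \<forall>j\<in>{1..k}. all_parallel (r i) X \<and> all_parallel (r j) Y \<longrightarrow> i \<noteq> j))"
proof -
  interpret setting E \<rho> k r using assms by unfold_locales
  have P1: "(\<exists>!i. i \<in> {1..k} \<and> all_parallel (r i) X)
          \<and> (\<forall>i\<in>{1..k}. all_parallel (r i) X \<longrightarrow>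
               (\<forall>j\<in>{1..k}. j \<noteq> i \<longrightarrow> no_two_parallel (r j) X)
             \<and> (\<rho> X = 1 + (\<Sum>e\<in>X. \<rho> {e} - 1) \<longrightarrow>
                  (\<forall>j\<in>{1..k}. j \<noteq> i \<longrightarrow>
                     (\<forall>C. C \<subseteq> X \<and> circuit E (r j) C \<longrightarrow> card C = 1))))"
    if X: "incidence_set E \<rho> X" for X
  proof -
    obtain i0 where i0: "i0 \<in> {1..k}" "all_parallel (r i0) X" using part1_ex[OF X] by blast
    have U: "\<exists>!i. i \<in> {1..k} \<and> all_parallel (r i) X"
    proof (rule ex1I[of _ i0])
      show "i0 \<in> {1..k} \<and> all_parallel (r i0) X" using i0 by blast
    next
      fix i assume "i \<in> {1..k} \<and> all_parallel (r i) X"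
      then show "i = i0" using part1_uniq[OF X _ i0(1) _ i0(2)] by blast
    qed
    have V: "\<forall>i\<in>{1..k}. all_parallel (r i) X \<longrightarrow>
               (\<forall>j\<in>{1..k}. j \<noteq> i \<longrightarrow> no_two_parallel (r j) X)
             \<and> (\<rho> X = 1 + (\<Sum>e\<in>X. \<rho> {e} - 1) \<longrightarrow>
                  (\<forall>j\<in>{1..k}. j \<noteq> i \<longrightarrow>
                     (\<forall>C. C \<subseteq> X \<and> circuit E (r j) C \<longrightarrow> card C = 1)))"
    proof (intro ballI impI)
      fix i assume i: "i \<in> {1..k}" "all_parallel (r i) X"
      have A: "\<forall>j\<in>{1..k}. j \<noteq> i \<longrightarrow> no_two_parallel (r j) X"
      proof (intro ballI impI)
        fix j assume j: "j \<in> {1..k}" "j \<noteq> i"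
        show "no_two_parallel (r j) X" by (rule part1_ntp[OF X i(1) j(1) j(2) i(2)])
      qed
      have B: "\<rho> X = 1 + (\<Sum>e\<in>X. \<rho> {e} - 1) \<longrightarrow>
                  (\<forall>j\<in>{1..k}. j \<noteq> i \<longrightarrow>
                     (\<forall>C. C \<subseteq> X \<and> circuit E (r j) C \<longrightarrow> card C = 1))"
      proof (intro impI ballI allI)
        fix j C assume "\<rho> X = 1 + (\<Sum>e\<in>X. \<rho> {e} - 1)" "j \<in> {1..k}" "j \<noteq> i" "C \<subseteq> X \<and> circuit E (r j) C"
        then show "card C = 1" using part1_circ[OF X i] by blast
      qed
      show "(\<forall>j\<in>{1..k}. j \<noteq> i \<longrightarrow> no_two_parallel (r j) X) \<and> (\<rho> X = 1 + (\<Sum>e\<in>X. \<rho> {e} - 1) \<longrightarrow>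
                  (\<forall>j\<in>{1..k}. j \<noteq> i \<longrightarrow>
                     (\<forall>C. C \<subseteq> X \<and> circuit E (r j) C \<longrightarrow> card C = 1)))"
        using A B by (rule conjI)
    qed
    show ?thesis using U V by (rule conjI)
  qed
  have P2: "card (X \<inter> Y) = 1
          \<and> (\<forall>i\<in>{1..k}. \<forall>j\<in>{1..k}. all_parallel (r i) X \<and> all_parallel (r j) Y \<longrightarrow> i \<noteq> j)"
    if h: "incidence_set E \<rho> X" "incidence_set E \<rho> Y" "a \<in> X" "b \<in> Y"
            "\<rho> {a, b} = \<rho> {a} + \<rho> {b}" "X \<inter> Y \<noteq> {}" for X Y a b
  proof (rule conjI)
    show "card (X \<inter> Y) = 1" by (rule part2_card[OF h])
    obtain c where c: "c \<in> X" "c \<in> Y" using h(6) by blast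
    show "\<forall>i\<in>{1..k}. \<forall>j\<in>{1..k}. all_parallel (r i) X \<and> all_parallel (r j) Y \<longrightarrow> i \<noteq> j"
    proof (intro ballI impI notI)
      fix i j assume ij: "i \<in> {1..k}" "j \<in> {1..k}" "all_parallel (r i) X \<and> all_parallel (r j) Y" "i = j"
      then show False using part2_neq[OF h(1-5) c, of i] by blast
    qed
  qed
  show ?thesis
    apply (rule conjI)
     apply (intro allI impI)
     apply (erule P1)
    apply (intro allI impI)
    apply (elim conjE)
    apply (rule P2; assumption)
    done
qed

end
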